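(* Let $n_0,n_1$ be positive integers and let $(\eta,\omega)=((\eta_\ell)_{\ell\ge1},(\omega_\ell)_{\ell\ge1})$ be a pair of nonnegative integer sequences with finite support. The pair of conditions [(a) $\mathsf{K}^+=0$, and (b) $\mathsf{K}^+_\ell\ge|\mathsf{K}^-_\ell|$ for every $\ell\ge1$] is equivalent to the following conditions: (i) $\sum_{\ell\ge1}\frac{\eta_\ell+\omega_\ell}{(n_0+n_1)^\ell}=1$; (ii) $\sum_{\ell\ge1}\frac{\eta_\ell-\omega_\ell}{(n_0-n_1)^\ell}=1$ whenever $n_0\ne n_1$; (iii) for every $\ell\ge1$, $\sum_{i\ge1}\frac{\eta_{\ell+i}+\omega_{\ell+i}}{(n_0+n_1)^i}\ge|\eta_\ell-\omega_\ell|$ if $n_0=n_1$, and $\sum_{i\ge1}\frac{\eta_{\ell+i}+\omega_{\ell+i}}{(n_0+n_1)^i}\ge\Bigl|\sum_{i\ge1}\frac{\eta_{\ell+i}-\omega_{\ell+i}}{(n_0-n_1)^i}\Bigr|$ if $n_0\ne n_1$.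
   Context: For integers $n,\ell>0$ and a finite-support integer sequence $\mu=(\mu_i)_{i\ge1}$, $\mathsf{K}_\ell(\mu,n)=n^\ell-\sum_{i=1}^{\ell}\mu_i n^{\ell-i}$ (with $0^0=1$). Define $\mathsf{K}^+_\ell=\mathsf{K}_\ell(\eta+\omega,n_0+n_1)$, $\mathsf{K}^-_\ell=\mathsf{K}_\ell(\eta-\omega,n_0-n_1)$, let $\mathsf{r}$ be the largest index in the union of the supports of $\eta$ and $\omega$, and $\mathsf{K}^\pm=\mathsf{K}^\pm_{\mathsf{r}}$. *)

theory Defs
  imports Complex_Main
begin

text \<open>K_l(mu, n) = n^l - sum_{i=1}^{l} mu_i n^(l-i), with 0^0 = 1 (Isabelle convention).\<close>
definition Kfun :: "nat \<Rightarrow> (nat \<Rightarrow> int) \<Rightarrow> int \<Rightarrow> int" where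
  "Kfun l \<mu> n = n ^ l - (\<Sum>i=1..l. \<mu> i * n ^ (l - i))"

definition Kplus :: "(nat \<Rightarrow> nat) \<Rightarrow> (nat \<Rightarrow> nat) \<Rightarrow> nat \<Rightarrow> nat \<Rightarrow> nat \<Rightarrow> int" where
  "Kplus \<eta> \<omega> n0 n1 l = Kfun l (\<lambda>i. int (\<eta> i) + int (\<omega> i)) (int n0 + int n1)"

definition Kminus :: "(nat \<Rightarrow> nat) \<Rightarrow> (nat \<Rightarrow> nat) \<Rightarrow> nat \<Rightarrow> nat \<Rightarrow> nat \<Rightarrow> int" where
  "Kminus \<eta> \<omega> n0 n1 l = Kfun l (\<lambda>i. int (\<eta> i) - int (\<omega> i)) (int n0 - int n1)"

definition rmax :: "(nat \<Rightarrow> nat) \<Rightarrow> (nat \<Rightarrow> nat) \<Rightarrow> nat" where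
  "rmax \<eta> \<omega> = Max (insert 0 {i. 1 \<le> i \<and> (\<eta> i \<noteq> 0 \<or> \<omega> i \<noteq> 0)})"

end

theory Submission
  imports Defs
begin

lemma key:
  fixes \<mu> :: "nat \<Rightarrow> real" and x :: real
  assumes x: "x \<noteq> 0" and z: "\<forall>j>r. \<mu> j = 0"
  shows "x^l * (\<Sum>i<r. \<mu> (Suc i) / x^Suc i) = (\<Sum>i=1..l. \<mu> i * x^(l-i)) + (\<Sum>i<r. \<mu> (l + Suc i) / x^Suc i)"
proof (induction l)
  case 0 show ?case by simp
next
  case (Suc l)
  have rec: "x * (\<Sum>i<r. \<mu> (l + Suc i) / x^Suc i) = \<mu> (Suc l) + (\<Sum>i<r. \<mu> (Suc l + Suc i) / x^Suc i)"
  proof -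
    have "x * (\<Sum>i<r. \<mu> (l + Suc i) / x^Suc i) = (\<Sum>i<r. \<mu> (l + Suc i) / x^i)"
      by (simp add: sum_distrib_left x)
    also have "\<dots> = (\<Sum>i<Suc r. \<mu> (l + Suc i) / x^i)" using z by simp
    also have "\<dots> = \<mu> (Suc l) + (\<Sum>i<r. \<mu> (Suc l + Suc i) / x^Suc i)"
      by (subst sum.lessThan_Suc_shift) simp
    finally show ?thesis .
  qed
  have A: "(\<Sum>i=1..Suc l. \<mu> i * x^(Suc l-i)) = x * (\<Sum>i=1..l. \<mu> i * x^(l-i)) + \<mu> (Suc l)"
  proof -
    have "(\<Sum>i=1..l. \<mu> i * x^(Suc l-i)) = x * (\<Sum>i=1..l. \<mu> i * x^(l-i))"
      unfolding sum_distrib_left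
      by (rule sum.cong) (auto simp: Suc_diff_le)
    then show ?thesis by (simp add: sum.cl_ivl_Suc)
  qed
  have "x^Suc l * (\<Sum>i<r. \<mu> (Suc i) / x^Suc i) = x * (x^l * (\<Sum>i<r. \<mu> (Suc i) / x^Suc i))"
    by simp
  also have "\<dots> = x * (\<Sum>i=1..l. \<mu> i * x^(l-i)) + x * (\<Sum>i<r. \<mu> (l + Suc i) / x^Suc i)"
    using Suc.IH by (simp add: distrib_left)
  also have "\<dots> = (\<Sum>i=1..Suc l. \<mu> i * x^(Suc l-i)) + (\<Sum>i<r. \<mu> (Suc l + Suc i) / x^Suc i)"
    using rec A by simp
  finally show ?case .
qed

lemma Kfun_real:
  fixes \<mu> :: "nat \<Rightarrow> int" and n :: int
  assumes "n \<noteq> 0" "\<forall>j>r. \<mu> j = 0"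
  shows "real_of_int (Kfun l \<mu> n) = real_of_int n ^ l * (1 - (\<Sum>i<r. real_of_int (\<mu> (Suc i)) / real_of_int n ^ Suc i))
     + (\<Sum>i<r. real_of_int (\<mu> (l + Suc i)) / real_of_int n ^ Suc i)"
proof -
  have "real_of_int n ^ l * (\<Sum>i<r. real_of_int (\<mu> (Suc i)) / real_of_int n ^ Suc i) =
    (\<Sum>i=1..l. real_of_int (\<mu> i) * real_of_int n^(l-i)) + (\<Sum>i<r. real_of_int (\<mu> (l + Suc i)) / real_of_int n ^ Suc i)"
    by (rule key[of "real_of_int n" r "\<lambda>i. real_of_int (\<mu> i)"]) (use assms in auto)
  then show ?thesis by (simp add: Kfun_def right_diff_distrib)
qed

lemma Kfun_zero:
  assumes "l \<ge> 1"
  shows "Kfun l \<mu> 0 = - \<mu> l"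
proof -
  have "(\<Sum>i=1..l. \<mu> i * 0 ^ (l - i)) = (\<Sum>i=1..l. if i = l then \<mu> l else 0)"
    by (rule sum.cong) auto
  then show ?thesis using assms by (simp add: Kfun_def)
qed

theorem lemma1:
  fixes n0 n1 :: nat and \<eta> \<omega> :: "nat \<Rightarrow> nat"
  assumes "n0 > 0" and "n1 > 0"
    and "finite {i. 1 \<le> i \<and> \<eta> i \<noteq> 0}"
    and "finite {i. 1 \<le> i \<and> \<omega> i \<noteq> 0}"
  shows "(Kplus \<eta> \<omega> n0 n1 (rmax \<eta> \<omega>) = 0 \<and>
          (\<forall>l\<ge>1. Kplus \<eta> \<omega> n0 n1 l \<ge> \<bar>Kminus \<eta> \<omega> n0 n1 l\<bar>))
     \<longleftrightarrow>
         ((\<Sum>l. (real (\<eta> (Suc l)) + real (\<omega> (Suc l))) / real (n0 + n1) ^ Suc l) = 1 \<and>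
          (n0 \<noteq> n1 \<longrightarrow>
             (\<Sum>l. (real (\<eta> (Suc l)) - real (\<omega> (Suc l))) / (real n0 - real n1) ^ Suc l) = 1) \<and>
          (\<forall>l\<ge>1.
             (n0 = n1 \<longrightarrow>
                (\<Sum>i. (real (\<eta> (l + Suc i)) + real (\<omega> (l + Suc i))) / real (n0 + n1) ^ Suc i)
                  \<ge> \<bar>real (\<eta> l) - real (\<omega> l)\<bar>) \<and>
             (n0 \<noteq> n1 \<longrightarrow>
                (\<Sum>i. (real (\<eta> (l + Suc i)) + real (\<omega> (l + Suc i))) / real (n0 + n1) ^ Suc i)
                  \<ge> \<bar>\<Sum>i. (real (\<eta> (l + Suc i)) - real (\<omega> (l + Suc i))) / (real n0 - real n1) ^ Suc i\<bar>)))"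
  proof -
  define r where "r = rmax \<eta> \<omega>"
  define N :: real where "N = real (n0 + n1)"
  define M :: real where "M = real n0 - real n1"
  define P where "P = (\<lambda>i. int (\<eta> i) + int (\<omega> i))"
  define Q where "Q = (\<lambda>i. int (\<eta> i) - int (\<omega> i))"
  have fin: "finite {i. 1 \<le> i \<and> (\<eta> i \<noteq> 0 \<or> \<omega> i \<noteq> 0)}"
  proof -
    have "{i. 1 \<le> i \<and> (\<eta> i \<noteq> 0 \<or> \<omega> i \<noteq> 0)} = {i. 1 \<le> i \<and> \<eta> i \<noteq> 0} \<union> {i. 1 \<le> i \<and> \<omega> i \<noteq> 0}" by auto
    then show ?thesis using assms(3,4) by simp
  qed
  have zr: "\<eta> j = 0 \<and> \<omega> j = 0" if "j > r" for j
  proof (rule ccontr)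
    assume "\<not> (\<eta> j = 0 \<and> \<omega> j = 0)"
    then have "j \<in> insert 0 {i. 1 \<le> i \<and> (\<eta> i \<noteq> 0 \<or> \<omega> i \<noteq> 0)}" using that by auto
    then have "j \<le> r" unfolding r_def rmax_def using fin by simp
    then show False using that by simp
  qed
  have Pz: "\<forall>j>r. P j = 0" and Qz: "\<forall>j>r. Q j = 0" using zr by (auto simp: P_def Q_def)
  have N0: "N \<noteq> 0" using assms(1) by (simp add: N_def)
  define Sp where "Sp = (\<lambda>l. \<Sum>i<r. (real (\<eta> (l + Suc i)) + real (\<omega> (l + Suc i))) / N ^ Suc i)"
  define Sm where "Sm = (\<lambda>l. \<Sum>i<r. (real (\<eta> (l + Suc i)) - real (\<omega> (l + Suc i))) / M ^ Suc i)"
  have Kp: "real_of_int (Kplus \<eta> \<omega> n0 n1 l) = N ^ l * (1 - Sp 0) + Sp l" for l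
  proof -
    have "int n0 + int n1 \<noteq> 0" using assms(1) by simp
    from Kfun_real[OF this Pz, of l] show ?thesis
      by (simp add: Kplus_def P_def Sp_def N_def)
  qed
  have Km: "real_of_int (Kminus \<eta> \<omega> n0 n1 l) = M ^ l * (1 - Sm 0) + Sm l" if "n0 \<noteq> n1" for l
  proof -
    have "int n0 - int n1 \<noteq> 0" using that by simp
    from Kfun_real[OF this Qz, of l] show ?thesis
      by (simp add: Kminus_def Q_def Sm_def M_def)
  qed
  have Km0: "Kminus \<eta> \<omega> n0 n1 l = - (int (\<eta> l) - int (\<omega> l))" if "n0 = n1" "l \<ge> 1" for l
    using Kfun_zero[OF that(2)] that(1) by (simp add: Kminus_def)
  have Spr: "Sp r = 0" by (simp add: Sp_def zr)
  have Smr: "Sm r = 0" by (simp add: Sm_def zr)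
  have inf1: "(\<Sum>l. (real (\<eta> (Suc l)) + real (\<omega> (Suc l))) / real (n0 + n1) ^ Suc l) = Sp 0"
    unfolding Sp_def N_def add_0_left by (rule suminf_finite) (auto simp: zr)
  have inf2: "(\<Sum>l. (real (\<eta> (Suc l)) - real (\<omega> (Suc l))) / (real n0 - real n1) ^ Suc l) = Sm 0"
    unfolding Sm_def M_def add_0_left by (rule suminf_finite) (auto simp: zr)
  have inf3: "(\<Sum>i. (real (\<eta> (l + Suc i)) + real (\<omega> (l + Suc i))) / real (n0 + n1) ^ Suc i) = Sp l" for l
    unfolding Sp_def N_def add_0_left by (rule suminf_finite) (auto simp: zr)
  have inf4: "(\<Sum>i. (real (\<eta> (l + Suc i)) - real (\<omega> (l + Suc i))) / (real n0 - real n1) ^ Suc i) = Sm l" for l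
    unfolding Sm_def M_def add_0_left by (rule suminf_finite) (auto simp: zr)
  have Kr: "Kplus \<eta> \<omega> n0 n1 r = 0 \<longleftrightarrow> Sp 0 = 1"
  proof -
    have "real_of_int (Kplus \<eta> \<omega> n0 n1 r) = N ^ r * (1 - Sp 0)" using Kp[of r] Spr by simp
    then show ?thesis using N0 by (metis eq_iff_diff_eq_0 mult_eq_0_iff of_int_eq_0_iff power_eq_0_iff)
  qed
  have intle: "(\<bar>b\<bar> \<le> a) \<longleftrightarrow> (\<bar>real_of_int b\<bar> \<le> real_of_int a)" for a b :: int
    by (metis of_int_abs of_int_le_iff)
  have main: "(Sp 0 = 1 \<and> (\<forall>l\<ge>1. \<bar>Kminus \<eta> \<omega> n0 n1 l\<bar> \<le> Kplus \<eta> \<omega> n0 n1 l)) \<longleftrightarrow>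
      (Sp 0 = 1 \<and> (n0 \<noteq> n1 \<longrightarrow> Sm 0 = 1) \<and>
        (\<forall>l\<ge>1. (n0 = n1 \<longrightarrow> \<bar>real (\<eta> l) - real (\<omega> l)\<bar> \<le> Sp l) \<and> (n0 \<noteq> n1 \<longrightarrow> \<bar>Sm l\<bar> \<le> Sp l)))"
    (is "?L \<longleftrightarrow> ?R")
  proof (cases "n0 = n1")
    case True
    have "(\<bar>Kminus \<eta> \<omega> n0 n1 l\<bar> \<le> Kplus \<eta> \<omega> n0 n1 l) \<longleftrightarrow> \<bar>real (\<eta> l) - real (\<omega> l)\<bar> \<le> Sp l"
      if "l \<ge> 1" "Sp 0 = 1" for l
      unfolding intle Km0[OF True that(1)] Kp using that by (simp add: abs_minus_commute)
    then show ?thesis using True by auto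
  next
    case False
    have M0: "M \<noteq> 0" using False by (simp add: M_def)
    have c: "(\<bar>Kminus \<eta> \<omega> n0 n1 l\<bar> \<le> Kplus \<eta> \<omega> n0 n1 l) \<longleftrightarrow> \<bar>Sm l\<bar> \<le> Sp l"
      if "Sp 0 = 1" "Sm 0 = 1" for l
      unfolding intle Km[OF False] Kp using that by simp
    show ?thesis
    proof
      assume H: "Sp 0 = 1 \<and> (\<forall>l\<ge>1. \<bar>Kminus \<eta> \<omega> n0 n1 l\<bar> \<le> Kplus \<eta> \<omega> n0 n1 l)"
      have r1: "r \<ge> 1"
      proof (rule ccontr)
        assume "\<not> r \<ge> 1" then have "r = 0" by simp
        then have "Sp 0 = 0" by (simp add: Sp_def)
        then show False using H by simp
      qed
      have "\<bar>Kminus \<eta> \<omega> n0 n1 r\<bar> \<le> Kplus \<eta> \<omega> n0 n1 r" using H r1 by blast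
      moreover have "Kplus \<eta> \<omega> n0 n1 r = 0" using H Kr by simp
      ultimately have "Kminus \<eta> \<omega> n0 n1 r = 0" by simp
      then have "M ^ r * (1 - Sm 0) = 0" using Km[OF False, of r] Smr by simp
      then have Sm1: "Sm 0 = 1" using M0 by simp
      show "Sp 0 = 1 \<and> (n0 \<noteq> n1 \<longrightarrow> Sm 0 = 1) \<and>
        (\<forall>l\<ge>1. (n0 = n1 \<longrightarrow> \<bar>real (\<eta> l) - real (\<omega> l)\<bar> \<le> Sp l) \<and> (n0 \<noteq> n1 \<longrightarrow> \<bar>Sm l\<bar> \<le> Sp l))"
        using H Sm1 c False by blast
    next
      assume H: "Sp 0 = 1 \<and> (n0 \<noteq> n1 \<longrightarrow> Sm 0 = 1) \<and>
        (\<forall>l\<ge>1. (n0 = n1 \<longrightarrow> \<bar>real (\<eta> l) - real (\<omega> l)\<bar> \<le> Sp l) \<and> (n0 \<noteq> n1 \<longrightarrow> \<bar>Sm l\<bar> \<le> Sp l))"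
      then show "Sp 0 = 1 \<and> (\<forall>l\<ge>1. \<bar>Kminus \<eta> \<omega> n0 n1 l\<bar> \<le> Kplus \<eta> \<omega> n0 n1 l)"
        using c False by blast
    qed
  qed
  show ?thesis unfolding inf1 inf2 inf3 inf4 r_def[symmetric] Kr using main .
qed

end
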